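(* Let $n, a$ be positive integers with $n \equiv 0 \pmod 4$, $a \equiv 0 \pmod 4$, $0 < a < n$, such that $p = \frac{a+n}{4}$ is prime, and let $k$ be a positive integer. Let $\Sigma = \{x \in \{-1,1\}^n : x_1 = 1,\ x_1+\dots+x_n = 0\}$. For $x \in \Sigma$ define $x^{*2k} \in \mathbb{R}^{n^{2k}+n}$ as the vector whose first $n^{2k}$ coordinates are the products $x_{i_1}x_{i_2}\cdots x_{i_{2k}}$, one for each word $(i_1,\dots,i_{2k}) \in \{1,\dots,n\}^{2k}$ (in a fixed order), and whose last $n$ coordinates are $\sqrt{2k a^{2k-1}}\,x_1,\dots,\sqrt{2k a^{2k-1}}\,x_n$. Let $\Omega' = \{x^{*2k} : x \in \Sigma\}$. Then: (i) $(x^{*2k}, y^{*2k}) = (x,y)^{2k} + 2k a^{2k-1}(x,y)$ for all $x,y\in\Sigma$; (ii) $\Omega'$ lies on a sphere centred at the origin of squared radius $n^{2k} + 2k a^{2k-1} n$, and $(\operatorname{diam}\Omega')^2 = 2n^{2k} + 4k a^{2k-1} n + (4k-2)a^{2k}$, with $|x^{*2k}-y^{*2k}| = \operatorname{diam}\Omega'$ if and only if $(x,y) = -a$; (iii) $\Omega'$ is contained in an affine (indeed linear) subspace of dimension at most $n^{2k}$, and $$ f(\Omega') \ge \frac{\binom{n-1}{n/2-1}}{\sum_{i=0}^{p-1}\binom{n}{i}}. $$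
   Context: For a set $\Omega$ in Euclidean space, $\operatorname{diam}\Omega = \sup_{x,y\in\Omega}|x-y|$, and $f(\Omega)$ denotes the minimum number $f$ such that $\Omega = \Omega_1\cup\dots\cup\Omega_f$ with $\operatorname{diam}\Omega_i < \operatorname{diam}\Omega$ for all $i$. $(\cdot,\cdot)$ is the standard inner product. *)

theory Defs
  imports "HOL-Analysis.Analysis"
begin

text \<open>Vectors of R^m are represented as functions nat => real; only the coordinates
  0..m-1 are relevant (coordinate i+1 of the paper is index i here).\<close>

definition ip :: "nat \<Rightarrow> (nat \<Rightarrow> real) \<Rightarrow> (nat \<Rightarrow> real) \<Rightarrow> real" where
  "ip m u v = (\<Sum>i<m. u i * v i)"

definition vdist :: "nat \<Rightarrow> (nat \<Rightarrow> real) \<Rightarrow> (nat \<Rightarrow> real) \<Rightarrow> real" where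
  "vdist m u v = sqrt (\<Sum>i<m. (u i - v i)^2)"

definition vdiam :: "nat \<Rightarrow> (nat \<Rightarrow> real) set \<Rightarrow> real" where
  "vdiam m S = (if S = {} then 0 else Sup {vdist m u v | u v. u \<in> S \<and> v \<in> S})"

definition borsuk_num :: "nat \<Rightarrow> (nat \<Rightarrow> real) set \<Rightarrow> nat" where
  "borsuk_num m S = Inf {f. \<exists>P :: nat \<Rightarrow> (nat \<Rightarrow> real) set.
       S = (\<Union>i<f. P i) \<and> (\<forall>i<f. vdiam m (P i) < vdiam m S)}"

definition Sigma_set :: "nat \<Rightarrow> (nat \<Rightarrow> real) set" where
  "Sigma_set n = {x. (\<forall>i<n. x i = 1 \<or> x i = -1) \<and> (\<forall>i\<ge>n. x i = 0)
                     \<and> x 0 = 1 \<and> (\<Sum>i<n. x i) = 0}"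

text \<open>x^{*2k} in R^(n^(2k)+n): coordinate j < n^(2k) corresponds to the word whose
  t-th letter (t < 2k) is the t-th base-n digit of j.\<close>
definition star :: "nat \<Rightarrow> nat \<Rightarrow> nat \<Rightarrow> (nat \<Rightarrow> real) \<Rightarrow> (nat \<Rightarrow> real)" where
  "star n a k x = (\<lambda>j. if j < n^(2*k) then (\<Prod>t<2*k. x ((j div n^t) mod n))
      else if j < n^(2*k) + n then sqrt (2 * real k * real a ^ (2*k-1)) * x (j - n^(2*k))
      else 0)"

end

theory Submission
  imports Defs "HOL-Library.Function_Algebras"
begin


lemma fun_sum_apply: "(\<Sum>i\<in>A. f i) y = (\<Sum>i\<in>A. f i y)"
  by (induction A rule: infinite_finite_induct) auto

global_interpretation fv: vector_space "\<lambda>(c::rat) (f::'b \<Rightarrow> rat) y. c * f y"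
  by unfold_locales (auto simp: fun_eq_iff algebra_simps)

definition mcount :: "nat \<Rightarrow> (nat \<Rightarrow> real) \<Rightarrow> (nat \<Rightarrow> real) \<Rightarrow> nat" where
  "mcount n x y = card {i. i < n \<and> x i = 1 \<and> y i \<noteq> 1}"

definition sg :: "real \<Rightarrow> rat" where "sg r = (if r = 1 then 1 else -1)"

definition mnm :: "nat set \<Rightarrow> (nat \<Rightarrow> real) \<Rightarrow> rat" where
  "mnm S = (\<lambda>y. \<Prod>i\<in>S. sg (y i))"

definition W :: "nat \<Rightarrow> nat \<Rightarrow> ((nat \<Rightarrow> real) \<Rightarrow> rat) set" where
  "W n d = fv.span (mnm ` {S. S \<subseteq> {..<n} \<and> card S \<le> d})"

lemma sg_sq: "sg r * sg r = 1" by (simp add: sg_def)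

lemma mono_W: "S \<subseteq> {..<n} \<Longrightarrow> card S \<le> d \<Longrightarrow> mnm S \<in> W n d"
  unfolding W_def by (rule fv.span_base) auto

lemma W_mono: "d \<le> e \<Longrightarrow> W n d \<subseteq> W n e"
  unfolding W_def by (rule fv.span_mono) auto

lemma mono_times_sg:
  assumes "S \<subseteq> {..<n}" "card S \<le> d" "i < n"
  shows "(\<lambda>y. mnm S y * sg (y i)) \<in> W n (Suc d)"
proof (cases "i \<in> S")
  case True
  have fin: "finite S" using assms(1) finite_subset by blast
  have "(\<lambda>y. mnm S y * sg (y i)) = mnm (S - {i})"
  proof
    fix y
    have h: "mnm S y = sg (y i) * mnm (S - {i}) y"
      unfolding mnm_def by (rule prod.remove[OF fin True])
    show "mnm S y * sg (y i) = mnm (S - {i}) y"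
      by (simp only: h) (simp add: sg_def)
  qed
  moreover have "card (S - {i}) \<le> Suc d" using assms card_Diff1_le[of S i] by linarith
  moreover have "S - {i} \<subseteq> {..<n}" using assms by blast
  ultimately show ?thesis using mono_W by metis
next
  case False
  have fin: "finite S" using assms(1) finite_subset by blast
  have "(\<lambda>y. mnm S y * sg (y i)) = mnm (insert i S)"
  proof
    fix y
    show "mnm S y * sg (y i) = mnm (insert i S) y"
      unfolding mnm_def using False fin by (simp add: prod.insert mult.commute)
  qed
  moreover have "card (insert i S) \<le> Suc d" using assms fin False by simp
  moreover have "insert i S \<subseteq> {..<n}" using assms by blast
  ultimately show ?thesis using mono_W by metis
qed

lemma mcount_q: "of_nat (mcount n x y) = (\<Sum>i\<in>{i. i < n \<and> x i = 1}. (1 - sg (y i)) / 2)"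
proof -
  have "(\<Sum>i\<in>{i. i < n \<and> x i = 1}. (1 - sg (y i)) / (2::rat))
      = (\<Sum>i\<in>{i. i < n \<and> x i = 1}. if y i \<noteq> 1 then 1 else 0)"
    by (rule sum.cong) (auto simp: sg_def)
  also have "\<dots> = of_nat (card {i. i < n \<and> x i = 1 \<and> y i \<noteq> 1})"
  proof -
    have "{i. i < n \<and> x i = 1} \<inter> {i. y i \<noteq> 1} = {i. i < n \<and> x i = 1 \<and> y i \<noteq> 1}" by auto
    then show ?thesis by (simp add: sum.If_cases)
  qed
  finally show ?thesis unfolding mcount_def by simp
qed

lemma W_times_lin:
  assumes "g \<in> W n d"
  shows "(\<lambda>y. g y * (of_nat (mcount n x y) - c)) \<in> W n (Suc d)"
proof -
  let ?A = "{i. i < n \<and> x i = 1}"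
  have base: "(\<lambda>y. mnm S y * (of_nat (mcount n x y) - c)) \<in> W n (Suc d)"
    if "S \<subseteq> {..<n}" "card S \<le> d" for S
  proof -
    have eq: "(\<lambda>y. mnm S y * (of_nat (mcount n x y) - c))
       = (\<Sum>i\<in>?A. (\<lambda>y. (1/2) * mnm S y) + (\<lambda>y. (-1/2) * (mnm S y * sg (y i))))
          + (\<lambda>y. (-c) * mnm S y)"
    proof (rule ext)
      fix y
      have "(\<Sum>i\<in>?A. (1/2) * mnm S y + (-1/2) * (mnm S y * sg (y i)))
          = (\<Sum>i\<in>?A. mnm S y * ((1 - sg (y i)) / 2))"
        by (rule sum.cong) (auto simp: algebra_simps)
      also have "\<dots> = mnm S y * of_nat (mcount n x y)"
        by (simp add: mcount_q sum_distrib_left)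
      finally show "mnm S y * (of_nat (mcount n x y) - c) = ((\<Sum>i\<in>?A. (\<lambda>y. (1/2) * mnm S y) + (\<lambda>y. (-1/2) * (mnm S y * sg (y i))))
          + (\<lambda>y. (-c) * mnm S y)) y"
        by (simp add: fun_sum_apply algebra_simps)
    qed
    have m1: "mnm S \<in> W n (Suc d)" using mono_W that by simp
    show ?thesis unfolding eq W_def
      apply (intro fv.span_add fv.span_sum fv.span_scale)
      using m1 mono_times_sg[OF that] by (auto simp: W_def)
  qed
  show ?thesis using assms unfolding W_def
  proof (induction rule: fv.span_induct_alt)
    case base
    then show ?case by (simp add: fv.span_zero[unfolded zero_fun_def])
  next
    case (step a f h)
    then obtain S where S: "S \<subseteq> {..<n}" "card S \<le> d" "f = mnm S" by auto
    have e: "(\<lambda>y. ((\<lambda>y. a * f y) + h) y * (of_nat (mcount n x y) - c))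
       = (\<lambda>y. a * (mnm S y * (of_nat (mcount n x y) - c))) + (\<lambda>y. h y * (of_nat (mcount n x y) - c))"
      using S by (auto simp: fun_eq_iff algebra_simps)
    show ?case unfolding e
      by (rule fv.span_add[OF fv.span_scale]) (use base[OF S(1,2)] step in \<open>auto simp: W_def\<close>)
  qed
qed



definition fi :: "nat \<Rightarrow> nat \<Rightarrow> (nat \<Rightarrow> real) \<Rightarrow> (nat \<Rightarrow> real) \<Rightarrow> int" where
  "fi p n x y = (\<Prod>j<p-1. int (mcount n x y) - int (j+1))"

definition fq :: "nat \<Rightarrow> nat \<Rightarrow> (nat \<Rightarrow> real) \<Rightarrow> (nat \<Rightarrow> real) \<Rightarrow> rat" where
  "fq p n x = (\<lambda>y. of_int (fi p n x y))"

lemma prod_W: "(\<lambda>y. \<Prod>j<q. (of_nat (mcount n x y) - of_nat (j+1) :: rat)) \<in> W n q"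
proof (induction q)
  case 0
  have "mnm {} \<in> W n 0" by (rule mono_W) auto
  then show ?case by (simp add: mnm_def)
next
  case (Suc q)
  from W_times_lin[OF Suc, of x "of_nat (Suc q)"] show ?case by simp
qed

lemma fq_W: "fq p n x \<in> W n (p - 1)"
proof -
  have "fq p n x = (\<lambda>y. \<Prod>j<p-1. (of_nat (mcount n x y) - of_nat (j+1) :: rat))"
    by (simp add: fq_def fi_def fun_eq_iff of_int_prod)
  then show ?thesis using prod_W by simp
qed

lemma int_indep:
  fixes M :: "'x \<Rightarrow> 'x \<Rightarrow> int" and p :: int
  assumes pr: "prime p" and fin: "finite G" and diag: "\<forall>x\<in>G. \<not> p dvd M x x"
    and off: "\<forall>x\<in>G. \<forall>y\<in>G. x \<noteq> y \<longrightarrow> p dvd M x y"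
  shows "(\<forall>y\<in>G. (\<Sum>x\<in>G. c x * M x y) = 0) \<Longrightarrow> \<forall>x\<in>G. c x = 0"
proof (induction "\<Sum>x\<in>G. nat \<bar>c x\<bar>" arbitrary: c rule: less_induct)
  case less
  have dv: "p dvd c y" if y: "y \<in> G" for y
  proof -
    have "(\<Sum>x\<in>G. c x * M x y) = c y * M y y + (\<Sum>x\<in>G-{y}. c x * M x y)"
      using fin y by (simp add: sum.remove)
    moreover have "p dvd (\<Sum>x\<in>G-{y}. c x * M x y)"
      using off y by (intro dvd_sum) auto
    ultimately have "p dvd c y * M y y" using less.prems y
      by (metis add.commute add_cancel_right_left dvd_add_right_iff dvd_0_right)
    then show ?thesis using diag y pr prime_dvd_mult_iff by blast
  qed
  show ?case
  proof (rule ccontr)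
    assume "\<not> (\<forall>x\<in>G. c x = 0)"
    then obtain x0 where x0: "x0 \<in> G" "c x0 \<noteq> 0" by auto
    define c' where "c' x = c x div p" for x
    have cc: "c x = p * c' x" if "x \<in> G" for x using dv[OF that] by (simp add: c'_def)
    have p0: "p \<noteq> 0" using pr by auto
    have p2: "\<bar>p\<bar> \<ge> 2" using prime_ge_2_int[OF pr] by simp
    have eq': "\<forall>y\<in>G. (\<Sum>x\<in>G. c' x * M x y) = 0"
    proof
      fix y assume y: "y \<in> G"
      have "p * (\<Sum>x\<in>G. c' x * M x y) = (\<Sum>x\<in>G. c x * M x y)"
        by (simp add: sum_distrib_left cc mult.assoc)
      then show "(\<Sum>x\<in>G. c' x * M x y) = 0" using less.prems y p0 by simp
    qed
    have lt: "(\<Sum>x\<in>G. nat \<bar>c' x\<bar>) < (\<Sum>x\<in>G. nat \<bar>c x\<bar>)"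
    proof (rule sum_strict_mono_ex1[OF fin])
      show "\<forall>x\<in>G. nat \<bar>c' x\<bar> \<le> nat \<bar>c x\<bar>"
      proof
        fix x assume "x \<in> G"
        then have e: "\<bar>c x\<bar> = \<bar>c' x\<bar> * \<bar>p\<bar>" by (simp add: cc abs_mult)
        have "\<bar>c' x\<bar> * 1 \<le> \<bar>c' x\<bar> * \<bar>p\<bar>" by (rule mult_left_mono) (use p2 in auto)
        then show "nat \<bar>c' x\<bar> \<le> nat \<bar>c x\<bar>" unfolding e by simp
      qed
      have e: "\<bar>c x0\<bar> = \<bar>c' x0\<bar> * \<bar>p\<bar>" using x0 by (simp add: cc abs_mult)
      have "c' x0 \<noteq> 0" using cc[OF x0(1)] x0 by auto
      then have "\<bar>c' x0\<bar> * 1 < \<bar>c' x0\<bar> * \<bar>p\<bar>" by (intro mult_strict_left_mono) (use p2 in auto)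
      then have "nat \<bar>c' x0\<bar> < nat \<bar>c x0\<bar>" unfolding e by simp
      then show "\<exists>x\<in>G. nat \<bar>c' x\<bar> < nat \<bar>c x\<bar>" using x0(1) by blast
    qed
    from less.hyps[OF lt eq'] have "c' x0 = 0" using x0 by auto
    then show False using cc[OF x0(1)] x0 by simp
  qed
qed

lemma common_denom:
  fixes u :: "'x \<Rightarrow> rat"
  shows "finite A \<Longrightarrow> \<exists>D::int. D > 0 \<and> (\<forall>a\<in>A. \<exists>z::int. of_int D * u a = of_int z)"
proof (induction A rule: finite_induct)
  case empty
  then show ?case by (intro exI[of _ 1]) auto
next
  case (insert a A)
  then obtain D where D: "D > 0" "\<forall>b\<in>A. \<exists>z::int. of_int D * u b = of_int z" by auto
  obtain nu de where q: "quotient_of (u a) = (nu, de)" by (cases "quotient_of (u a)")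
  have de: "de > 0" using quotient_of_denom_pos[OF q] .
  have ua: "u a = of_int nu / of_int de" using quotient_of_div[OF q] .
  have "\<forall>b\<in>insert a A. \<exists>z. of_int (D * de) * u b = of_int z"
  proof
    fix b assume "b \<in> insert a A"
    then show "\<exists>z. of_int (D * de) * u b = of_int z"
    proof
      assume "b = a"
      then show ?thesis using de by (intro exI[of _ "D * nu"]) (simp add: ua)
    next
      assume "b \<in> A"
      then obtain z where "of_int D * u b = of_int z" using D by auto
      then show ?thesis by (intro exI[of _ "de * z"]) (simp add: algebra_simps)
    qed
  qed
  moreover have "D * de > 0" using D de by simp
  ultimately show ?case by blast
qed

lemma finite_Sigma: "finite (Sigma_set n)"
proof -
  have "Sigma_set n \<subseteq> {f. \<forall>x. (x \<in> {..<n} \<longrightarrow> f x \<in> {1,-1}) \<and> (x \<notin> {..<n} \<longrightarrow> f x = 0)}"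
    unfolding Sigma_set_def by auto
  then show ?thesis using finite_set_of_finite_funs[of "{..<n}" "{1,-1::real}" 0] finite_subset by blast
qed

lemma FW:
  assumes pr: "prime p" and FS: "F \<subseteq> Sigma_set n"
    and nz: "\<forall>x\<in>F. \<forall>y\<in>F. x \<noteq> y \<longrightarrow> mcount n x y mod p \<noteq> 0"
  shows "card F \<le> card {S. S \<subseteq> {..<n} \<and> card S \<le> p - 1}"
proof -
  have finF: "finite F" using finite_Sigma FS finite_subset by blast
  have pri: "prime (int p)" using pr by simp
  have m0: "mcount n x x = 0" for x unfolding mcount_def by simp
  have diag: "\<not> int p dvd fi p n x x" for x
  proof
    assume "int p dvd fi p n x x"
    then have "int p dvd (\<Prod>j<p-1. int (mcount n x x) - int (j+1))" by (simp only: fi_def)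
    then have "\<exists>j\<in>{..<p-1}. int p dvd int (mcount n x x) - int (j+1)"
      by (simp only: prime_dvd_prod_iff[OF finite_lessThan pri])
    then obtain j where j: "j < p - 1" "int p dvd int (mcount n x x) - int (j+1)" by auto
    have "int (mcount n x x) - int (j+1) = - int (j+1)" using m0 by simp
    then have "int p dvd int (j+1)" using j(2) by (metis dvd_minus_iff)
    then have "int p \<le> int (j+1)" by (rule zdvd_imp_le) simp
    with j show False by linarith
  qed
  have off: "int p dvd fi p n x y" if "x \<in> F" "y \<in> F" "x \<noteq> y" for x y
  proof -
    let ?m = "mcount n x y"
    have r0: "?m mod p \<noteq> 0" using nz that by auto
    have p0: "p > 0" using pr prime_gt_0_nat by blast
    have rl: "?m mod p < p" using p0 by simp
    define j where "j = ?m mod p - 1"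
    have j: "j < p - 1" "j + 1 = ?m mod p" using r0 rl unfolding j_def by auto
    have eq: "?m = p * (?m div p) + (j+1)" using j(2) div_mult_mod_eq[of ?m p] by (simp add: mult.commute)
    have "int ?m = int p * int (?m div p) + int (j+1)" using arg_cong[OF eq, of int] by simp
    then have "int ?m - int (j+1) = int p * int (?m div p)" by linarith
    then have "int p dvd (int ?m - int (j+1))" by simp
    also have "\<dots> dvd fi p n x y" unfolding fi_def using j(1) by (intro dvd_prodI) auto
    finally show ?thesis .
  qed
  have inj: "inj_on (fq p n) F"
  proof
    fix x y assume xy: "x \<in> F" "y \<in> F" "fq p n x = fq p n y"
    then have "fi p n x x = fi p n y x" unfolding fq_def by (metis of_int_eq_iff)
    then show "x = y" using diag[of x] off[of y x] xy by auto
  qed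
  have indep: "\<not> fv.dependent (fq p n ` F)"
  proof
    assume "fv.dependent (fq p n ` F)"
    then obtain t u where t: "finite t" "t \<subseteq> fq p n ` F"
        "(\<Sum>v\<in>t. (\<lambda>y. u v * v y)) = 0" and v0: "\<exists>v\<in>t. u v \<noteq> 0"
      unfolding fv.dependent_explicit by blast
    define G where "G = {x\<in>F. fq p n x \<in> t}"
    have tG: "t = fq p n ` G" using t(2) unfolding G_def by auto
    have injG: "inj_on (fq p n) G" using inj by (rule inj_on_subset) (auto simp: G_def)
    have finG: "finite G" using finF by (simp add: G_def)
    have sum0: "(\<Sum>x\<in>G. u (fq p n x) * fq p n x y) = 0" for y
    proof -
      have "(\<Sum>v\<in>t. u v * v y) = 0" using fun_cong[OF t(3), of y] by (simp add: fun_sum_apply)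
      then show ?thesis unfolding tG by (simp add: sum.reindex[OF injG])
    qed
    obtain D where D: "D > 0" "\<forall>x\<in>G. \<exists>z::int. of_int D * u (fq p n x) = of_int z"
      using common_denom[OF finG, of "\<lambda>x. u (fq p n x)"] by auto
    then obtain z where z: "\<forall>x\<in>G. of_int D * u (fq p n x) = of_int (z x)" by metis
    have zs: "\<forall>y\<in>G. (\<Sum>x\<in>G. z x * fi p n x y) = 0"
    proof
      fix y
      have "of_int (\<Sum>x\<in>G. z x * fi p n x y) = (\<Sum>x\<in>G. of_int D * u (fq p n x) * fq p n x y)"
        using z by (simp add: of_int_sum fq_def)
      also have "\<dots> = of_int D * (\<Sum>x\<in>G. u (fq p n x) * fq p n x y)"
        by (simp add: sum_distrib_left mult.assoc)
      also have "\<dots> = 0" using sum0 by simp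
      finally have h: "(of_int (\<Sum>x\<in>G. z x * fi p n x y) :: rat) = 0" .
      then show "(\<Sum>x\<in>G. z x * fi p n x y) = 0" by (simp only: of_int_eq_0_iff)
    qed
    have "\<forall>x\<in>G. z x = 0"
      by (rule int_indep[OF pri finG, of "fi p n" z]) (use diag off zs in \<open>auto simp: G_def\<close>)
    then have "\<forall>x\<in>G. u (fq p n x) = 0" using z D by auto
    then show False using v0 tG by auto
  qed
  let ?T = "mnm ` {S. S \<subseteq> {..<n} \<and> card S \<le> p - 1}"
  have finS: "finite {S. S \<subseteq> {..<n} \<and> card S \<le> p - 1}"
    by (rule finite_subset[of _ "Pow {..<n}"]) auto
  have "fq p n ` F \<subseteq> fv.span ?T" using fq_W unfolding W_def by auto
  then have "card (fq p n ` F) \<le> card ?T"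
    using fv.independent_span_bound[OF finite_imageI[OF finS] indep] by auto
  also have "\<dots> \<le> card {S. S \<subseteq> {..<n} \<and> card S \<le> p - 1}" by (rule card_image_le[OF finS])
  finally show ?thesis using card_image[OF inj] by simp
qed



lemma sum_split_add: "(\<Sum>j<M+(n::nat). f j) = (\<Sum>j<M. f j) + (\<Sum>i<n. f (M+i))"
  by (induction n) (simp_all add: add.assoc)

lemma words_sum:
  fixes g :: "nat \<Rightarrow> real"
  assumes n: "n > 0"
  shows "(\<Sum>j<n^m. \<Prod>t<m. g ((j div n^t) mod n)) = (\<Sum>i<n. g i)^m"
proof (induction m)
  case 0
  then show ?case by simp
next
  case (Suc m)
  let ?P = "\<lambda>q. \<Prod>t<m. g ((q div n^t) mod n)"
  have inner: "(\<Sum>j\<in>{q*n..<q*n+n}. \<Prod>t<Suc m. g ((j div n^t) mod n)) = ?P q * (\<Sum>i<n. g i)" for q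
  proof -
    have "{q*n..<q*n+n} = {0 + q*n..<n + q*n}" by (simp add: add.commute)
    then have "(\<Sum>j\<in>{q*n..<q*n+n}. \<Prod>t<Suc m. g ((j div n^t) mod n))
        = (\<Sum>r\<in>{0..<n}. \<Prod>t<Suc m. g (((r + q*n) div n^t) mod n))"
      by (simp only: sum.shift_bounds_nat_ivl)
    also have "\<dots> = (\<Sum>r<n. g r * ?P q)"
    proof (rule sum.cong)
      fix r assume r: "r \<in> {..<n}"
      have d: "(r + q*n) div n = q" using r n by simp
      have "(\<Prod>t<Suc m. g (((r + q*n) div n^t) mod n))
          = g (((r + q*n) div n^0) mod n) * (\<Prod>t<m. g (((r + q*n) div n^(Suc t)) mod n))"
        by (rule prod.lessThan_Suc_shift)
      also have "\<dots> = g r * ?P q"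
        using r d by (simp add: div_mult2_eq)
      finally show "(\<Prod>t<Suc m. g (((r + q*n) div n^t) mod n)) = g r * ?P q" .
    qed (simp add: atLeast0LessThan)
    finally show ?thesis by (simp add: sum_distrib_right mult.commute)
  qed
  have "(\<Sum>j<n^Suc m. \<Prod>t<Suc m. g ((j div n^t) mod n))
      = (\<Sum>q<n^m. \<Sum>j\<in>{q*n..<q*n+n}. \<Prod>t<Suc m. g ((j div n^t) mod n))"
    by (simp only: sum.nat_group power_Suc2)
  also have "\<dots> = (\<Sum>q<n^m. ?P q * (\<Sum>i<n. g i))"
    by (intro sum.cong refl inner)
  also have "\<dots> = (\<Sum>q<n^m. ?P q) * (\<Sum>i<n. g i)"
    by (rule sum_distrib_right[symmetric])
  finally show ?case by (simp only: Suc.IH power_Suc2)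
qed

lemma Sigma_n_pos: "x \<in> Sigma_set n \<Longrightarrow> n > 0"
proof (rule ccontr)
  assume x: "x \<in> Sigma_set n" and "\<not> n > 0"
  then have "n = 0" by simp
  with x show False by (auto simp: Sigma_set_def)
qed

lemma star_low:
  assumes x: "x \<in> Sigma_set n" and k: "k > 0" and i: "i < n"
  shows "star n a k x i = x i"
proof -
  have n: "n > 0" using Sigma_n_pos[OF x] .
  have nle: "n \<le> n^(2*k)" using n k by (simp add: self_le_power)
  have x0: "x 0 = 1" using x by (simp add: Sigma_set_def)
  have "(\<Prod>t<2*k. x ((i div n^t) mod n)) = (\<Prod>t<Suc (2*k-1). x ((i div n^t) mod n))"
    using k by simp
  also have "\<dots> = x ((i div n^0) mod n) * (\<Prod>t<2*k-1. x ((i div n^(Suc t)) mod n))"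
    by (rule prod.lessThan_Suc_shift)
  also have "\<dots> = x i"
  proof -
    have "i div n^(Suc t) = 0" for t
    proof -
      have "n \<le> n * n^t" using n by simp
      then have "i < n * n^t" using i by linarith
      then have "i div (n * n^t) = 0" by (rule div_less)
      then show ?thesis by (simp only: power_Suc)
    qed
    then show ?thesis using i x0 by simp
  qed
  finally show ?thesis using i nle unfolding star_def by simp
qed

lemma star_high:
  assumes "i < n"
  shows "star n a k x (n^(2*k) + i) = sqrt (2 * real k * real a ^ (2*k-1)) * x i"
  using assms unfolding star_def by simp

lemma ip_self: "x \<in> Sigma_set n \<Longrightarrow> ip n x x = n"
proof -
  assume x: "x \<in> Sigma_set n"
  have "(\<Sum>i<n. x i * x i) = (\<Sum>i<n. 1)"
    by (rule sum.cong) (use x in \<open>auto simp: Sigma_set_def\<close>)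
  then show ?thesis unfolding ip_def by simp
qed
    

definition Aset :: "nat \<Rightarrow> (nat \<Rightarrow> real) \<Rightarrow> nat set" where
  "Aset n x = {i. i < n \<and> x i = 1}"

lemma Sigma_card:
  assumes x: "x \<in> Sigma_set n"
  shows "2 * card (Aset n x) = n"
proof -
  have "(\<Sum>i<n. x i) = (\<Sum>i<n. (if x i = 1 then 2 else 0) - 1)"
    by (rule sum.cong) (use x in \<open>auto simp: Sigma_set_def\<close>)
  also have "\<dots> = (\<Sum>i<n. (if x i = 1 then 2 else 0)) - real n"
    by (simp add: sum_subtractf)
  also have "(\<Sum>i<n. (if x i = 1 then 2 else 0)) = (2::real) * real (card (Aset n x))"
  proof -
    have "{..<n} \<inter> {i. x i = 1} = Aset n x" by (auto simp: Aset_def)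
    then show ?thesis by (simp add: sum.If_cases)
  qed
  finally have "0 = 2 * real (card (Aset n x)) - real n" using x by (simp add: Sigma_set_def)
  then show ?thesis by linarith
qed

lemma mcount_alt: "mcount n x y = card (Aset n x - Aset n y)"
  unfolding mcount_def Aset_def by (rule arg_cong[where f=card]) auto

lemma Aset_fin: "finite (Aset n x)" unfolding Aset_def by simp

lemma mcount_sym:
  assumes x: "x \<in> Sigma_set n" and y: "y \<in> Sigma_set n"
  shows "mcount n y x = mcount n x y"
proof -
  have "card (Aset n x) = card (Aset n y)" using Sigma_card[OF x] Sigma_card[OF y] by simp
  moreover have "card (Aset n x) = card (Aset n x \<inter> Aset n y) + card (Aset n x - Aset n y)"
    using card_Int_Diff[OF Aset_fin] by blast
  moreover have "card (Aset n y) = card (Aset n y \<inter> Aset n x) + card (Aset n y - Aset n x)"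
    using card_Int_Diff[OF Aset_fin] by blast
  ultimately show ?thesis unfolding mcount_alt by (simp add: Int_commute)
qed

lemma ip_mcount:
  assumes x: "x \<in> Sigma_set n" and y: "y \<in> Sigma_set n"
  shows "ip n x y = real n - 4 * real (mcount n x y)"
proof -
  have "(\<Sum>i<n. x i * y i) = (\<Sum>i<n. 1 - (if i \<in> Aset n x - Aset n y then 2 else 0)
                                        - (if i \<in> Aset n y - Aset n x then 2 else 0))"
  proof (rule sum.cong)
    fix i assume "i \<in> {..<n}"
    then have "x i = 1 \<or> x i = -1" "y i = 1 \<or> y i = -1" "i < n" using x y by (auto simp: Sigma_set_def)
    then show "x i * y i = 1 - (if i \<in> Aset n x - Aset n y then 2 else 0)
                                        - (if i \<in> Aset n y - Aset n x then 2 else 0)"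
      by (auto simp: Aset_def)
  qed simp
  also have "\<dots> = real n - 2 * real (card (Aset n x - Aset n y)) - 2 * real (card (Aset n y - Aset n x))"
  proof -
    have a: "{..<n} \<inter> (Aset n x - Aset n y) = Aset n x - Aset n y" by (auto simp: Aset_def)
    have b: "{..<n} \<inter> (Aset n y - Aset n x) = Aset n y - Aset n x" by (auto simp: Aset_def)
    have a': "{..<n} \<inter> {i \<in> Aset n x. i \<notin> Aset n y} = Aset n x - Aset n y" by (auto simp: Aset_def)
    have b': "{..<n} \<inter> {i \<in> Aset n y. i \<notin> Aset n x} = Aset n y - Aset n x" by (auto simp: Aset_def)
    show ?thesis by (simp add: sum_subtractf sum.If_cases a b a' b')
  qed
  finally show ?thesis unfolding ip_def using mcount_sym[OF x y] by (simp add: mcount_alt)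
qed

lemma mcount_self: "mcount n x x = 0" unfolding mcount_def by simp

lemma mcount0_eq:
  assumes x: "x \<in> Sigma_set n" and y: "y \<in> Sigma_set n" and m: "mcount n x y = 0"
  shows "x = y"
proof
  fix i
  have m2: "mcount n y x = 0" using m mcount_sym[OF x y] by simp
  have e1: "Aset n x - Aset n y = {}" using m unfolding mcount_alt using Aset_fin
    by (meson card_0_eq finite_Diff)
  have e2: "Aset n y - Aset n x = {}" using m2 unfolding mcount_alt using Aset_fin
    by (meson card_0_eq finite_Diff)
  show "x i = y i"
  proof (cases "i < n")
    case True
    then have "x i = 1 \<longleftrightarrow> y i = 1" using e1 e2 unfolding Aset_def by blast
    then show ?thesis using x y True unfolding Sigma_set_def by force
  next
    case False
    then show ?thesis using x y unfolding Sigma_set_def by auto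
  qed
qed

lemma mcount_le:
  assumes x: "x \<in> Sigma_set n" and y: "y \<in> Sigma_set n"
  shows "mcount n x y + 1 \<le> n div 2"
proof -
  have n: "n > 0" using Sigma_n_pos[OF x] .
  have "0 \<in> Aset n y" using y n by (simp add: Aset_def Sigma_set_def)
  then have "Aset n x - Aset n y \<subseteq> Aset n x - {0}" by blast
  then have "card (Aset n x - Aset n y) \<le> card (Aset n x - {0})" by (intro card_mono) (auto simp: Aset_fin)
  moreover have "0 \<in> Aset n x" using x n by (simp add: Aset_def Sigma_set_def)
  then have "card (Aset n x - {0}) = card (Aset n x) - 1" by (simp add: Aset_fin)
  moreover have "card (Aset n x) \<ge> 1" using \<open>0 \<in> Aset n x\<close> Aset_fin by (metis card_0_eq empty_iff less_one not_le)
  ultimately show ?thesis unfolding mcount_alt using Sigma_card[OF x] by linarith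
qed


lemma star_ip:
  assumes x: "x \<in> Sigma_set n" and y: "y \<in> Sigma_set n" and k: "k > 0"
  shows "ip (n^(2*k)+n) (star n a k x) (star n a k y)
     = (ip n x y)^(2*k) + 2 * real k * real a^(2*k-1) * ip n x y"
proof -
  let ?c = "2 * real k * real a^(2*k-1)"
  let ?M = "n^(2*k)"
  have n: "n > 0" using Sigma_n_pos[OF x] .
  have c0: "?c \<ge> 0" by simp
  have "ip (?M+n) (star n a k x) (star n a k y)
      = (\<Sum>j<?M. star n a k x j * star n a k y j) + (\<Sum>i<n. star n a k x (?M+i) * star n a k y (?M+i))"
    unfolding ip_def by (rule sum_split_add)
  also have "(\<Sum>j<?M. star n a k x j * star n a k y j)
      = (\<Sum>j<?M. \<Prod>t<2*k. (\<lambda>i. x i * y i) ((j div n^t) mod n))"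
    by (rule sum.cong) (simp_all add: star_def prod.distrib)
  also have "\<dots> = (ip n x y)^(2*k)" unfolding ip_def by (rule words_sum[OF n])
  also have "(\<Sum>i<n. star n a k x (?M+i) * star n a k y (?M+i)) = (\<Sum>i<n. ?c * (x i * y i))"
  proof (rule sum.cong)
    fix i assume "i \<in> {..<n}"
    then have "star n a k x (?M+i) * star n a k y (?M+i) = (sqrt ?c * sqrt ?c) * (x i * y i)"
      by (simp add: star_high)
    also have "sqrt ?c * sqrt ?c = ?c" using c0 by simp
    finally show "star n a k x (?M+i) * star n a k y (?M+i) = ?c * (x i * y i)" .
  qed simp
  also have "\<dots> = ?c * ip n x y" unfolding ip_def by (simp add: sum_distrib_left)
  finally show ?thesis .
qed

lemma vdist_sq: "(vdist m u v)^2 = ip m u u + ip m v v - 2 * ip m u v"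
proof -
  have "(vdist m u v)^2 = (\<Sum>i<m. (u i - v i)^2)"
    unfolding vdist_def by (simp add: sum_nonneg)
  also have "\<dots> = (\<Sum>i<m. u i * u i + v i * v i - 2 * (u i * v i))"
    by (rule sum.cong) (simp_all add: power2_eq_square algebra_simps)
  also have "\<dots> = ip m u u + ip m v v - 2 * ip m u v"
    unfolding ip_def by (simp add: sum.distrib sum_subtractf sum_distrib_left)
  finally show ?thesis .
qed

definition Qf :: "nat \<Rightarrow> nat \<Rightarrow> real \<Rightarrow> real" where
  "Qf k a t = t^(2*k) + 2 * real k * real a^(2*k-1) * t"

lemma dist_formula:
  assumes x: "x \<in> Sigma_set n" and y: "y \<in> Sigma_set n" and k: "k > 0"
  shows "(vdist (n^(2*k)+n) (star n a k x) (star n a k y))^2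
     = 2 * (real n^(2*k) + 2 * real k * real a^(2*k-1) * real n) - 2 * Qf k a (ip n x y)"
  unfolding vdist_sq star_ip[OF x x k] star_ip[OF y y k] star_ip[OF x y k] ip_self[OF x] ip_self[OF y] Qf_def
  by algebra

lemma bern: "(s::real) \<ge> 0 \<Longrightarrow> s^m \<ge> 1 + real m * (s - 1)"
proof (induction m)
  case 0
  then show ?case by simp
next
  case (Suc m)
  have "s * (1 + real m * (s - 1)) \<le> s * s^m" by (rule mult_left_mono) (use Suc in auto)
  moreover have "s * (1 + real m * (s - 1)) = 1 + real (Suc m) * (s - 1) + real m * (s-1)^2"
    by (simp add: algebra_simps power2_eq_square)
  moreover have "real m * (s-1)^2 \<ge> 0" by simp
  ultimately have "1 + real (Suc m) * (s - 1) \<le> s * s^m" by linarith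
  then show ?case by simp
qed

lemma bern_even:
  assumes k: "k > 0" and s: "(s::real) \<noteq> 1"
  shows "s^(2*k) > 1 + real (2*k) * (s - 1)"
proof (cases "s \<ge> 0")
  case True
  define m where "m = 2*k - 1"
  have m: "2*k = Suc m" "m \<ge> 1" using k unfolding m_def by arith+
  have "s * (1 + real m * (s - 1)) \<le> s * s^m" by (rule mult_left_mono) (use True bern in auto)
  moreover have "s * (1 + real m * (s - 1)) = 1 + real (Suc m) * (s - 1) + real m * (s-1)^2"
    by (simp add: algebra_simps power2_eq_square)
  moreover have "real m * (s-1)^2 > 0" using m s by simp
  ultimately have "1 + real (Suc m) * (s - 1) < s * s^m" by linarith
  then show ?thesis unfolding m by simp
next
  case False
  have "s^(2*k) = (s^2)^k" by (simp add: power_mult)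
  then have p: "s^(2*k) \<ge> 0" by simp
  have "real k * (s - 1) \<le> real k * (-1)" by (rule mult_left_mono) (use False in auto)
  then have "1 + real (2*k) * (s - 1) < 0" using k by simp
  with p show ?thesis by linarith
qed

lemma Qf_min:
  assumes a: "a > 0" and k: "k > 0"
  shows "Qf k a (- real a) = (1 - 2 * real k) * real a^(2*k)"
    and "t \<noteq> - real a \<Longrightarrow> Qf k a t > Qf k a (- real a)"
proof -
  have pa: "real a ^ (2*k-1) * real a = real a^(2*k)"
    using k by (metis power_minus_mult mult_pos_pos pos2)
  show q: "Qf k a (- real a) = (1 - 2 * real k) * real a^(2*k)"
    unfolding Qf_def using pa by (simp add: power_minus_even algebra_simps)
  assume t: "t \<noteq> - real a"
  define s where "s = - t / real a"
  have ts: "t = - (real a * s)" using a by (simp add: s_def)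
  have s1: "s \<noteq> 1" using t a by (auto simp: s_def field_simps)
  have A: "real a ^(2*k) > 0" using a by simp
  have "Qf k a t = real a^(2*k) * (s^(2*k) - real (2*k) * s)"
    unfolding Qf_def ts using pa[symmetric]
    by (simp add: power_minus_even power_mult_distrib algebra_simps)
  also have "\<dots> > real a^(2*k) * (1 - real (2*k))"
    using bern_even[OF k s1] A by (intro mult_strict_left_mono) (auto simp: algebra_simps)
  finally show "Qf k a t > Qf k a (- real a)" unfolding q by (simp add: algebra_simps)
qed


definition vecS :: "nat \<Rightarrow> nat set \<Rightarrow> nat \<Rightarrow> real" where
  "vecS n S = (\<lambda>i. if i < n then (if i \<in> S then 1 else -1) else 0)"

lemma Aset_vec: "S \<subseteq> {..<n} \<Longrightarrow> Aset n (vecS n S) = S"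
  unfolding Aset_def vecS_def by auto

lemma vec_in:
  assumes S: "S \<subseteq> {..<n}" and z: "0 \<in> S" and c: "2 * card S = n"
  shows "vecS n S \<in> Sigma_set n"
proof -
  have fin: "finite S" using S finite_subset by blast
  have "(\<Sum>i<n. vecS n S i) = (\<Sum>i<n. (if i \<in> S then 2 else 0) - 1)"
    by (rule sum.cong) (auto simp: vecS_def)
  also have "\<dots> = (\<Sum>i<n. (if i \<in> S then 2 else 0)) - real n" by (simp add: sum_subtractf)
  also have "(\<Sum>i<n. (if i \<in> S then 2 else 0)) = (2::real) * real (card S)"
  proof -
    have "{..<n} \<inter> S = S" using S by auto
    then show ?thesis by (simp add: sum.If_cases)
  qed
  finally have "(\<Sum>i<n. vecS n S i) = 0" using c by simp
  moreover have "n > 0" using S z by auto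
  ultimately show ?thesis using z unfolding Sigma_set_def by (auto simp: vecS_def)
qed

lemma exist_pair:
  assumes "n mod 4 = 0" "a mod 4 = 0" "0 < a" "a < n"
  shows "\<exists>x\<in>Sigma_set n. \<exists>y\<in>Sigma_set n. ip n x y = - real a"
proof -
  define q where "q = n div 4"
  define r where "r = a div 4"
  have nq: "n = 4*q" and ar: "a = 4*r" using assms unfolding q_def r_def by auto
  have rq: "0 < r" "r < q" using assms nq ar by auto
  define A where "A = {..<2*q}"
  define B where "B = {..<q-r} \<union> {3*q-r..<4*q}"
  have A1: "A \<subseteq> {..<n}" "0 \<in> A" "2 * card A = n" using nq rq by (auto simp: A_def)
  have disj: "{..<q-r} \<inter> {3*q-r..<4*q} = {}" by auto
  have cB: "card B = (q - r) + (4*q - (3*q - r))"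
    unfolding B_def by (subst card_Un_disjoint[OF _ _ disj]) auto
  have B1: "B \<subseteq> {..<n}" "0 \<in> B" "2 * card B = n" using nq rq cB by (auto simp: B_def)
  have AB: "A - B = {q-r..<2*q}" using rq by (auto simp: A_def B_def)
  let ?x = "vecS n A" and ?y = "vecS n B"
  have x: "?x \<in> Sigma_set n" and y: "?y \<in> Sigma_set n" using vec_in A1 B1 by auto
  have "mcount n ?x ?y = q + r"
    unfolding mcount_alt Aset_vec[OF A1(1)] Aset_vec[OF B1(1)] AB using rq by simp
  then have "ip n ?x ?y = - real a" unfolding ip_mcount[OF x y] using nq ar by simp
  with x y show ?thesis by blast
qed

lemma vdist_nonneg: "vdist m u v \<ge> 0"
  unfolding vdist_def by (simp add: sum_nonneg)

lemma vdist_eq: 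
  assumes x: "x \<in> Sigma_set n" and y: "y \<in> Sigma_set n" and k: "k > 0"
  shows "vdist (n^(2*k)+n) (star n a k x) (star n a k y)
     = sqrt (2 * (real n^(2*k) + 2 * real k * real a^(2*k-1) * real n) - 2 * Qf k a (ip n x y))"
  using dist_formula[OF x y k, of a] vdist_nonneg by (metis real_sqrt_unique)

lemma diam_part:
  assumes n4: "n mod 4 = 0" and a4: "a mod 4 = 0" and a0: "0 < a" and an: "a < n" and k: "0 < k"
  defines "N \<equiv> n^(2*k) + n"
  defines "R \<equiv> 2 * (real n^(2*k) + 2 * real k * real a^(2*k-1) * real n) - 2 * Qf k a (- real a)"
  shows "vdiam N (star n a k ` Sigma_set n) = sqrt R"
    and "R = 2 * real n^(2*k) + 4 * real k * real a^(2*k-1) * real n + (4 * real k - 2) * real a^(2*k)"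
    and "R > 0"
    and "\<And>x y. x \<in> Sigma_set n \<Longrightarrow> y \<in> Sigma_set n \<Longrightarrow>
           vdist N (star n a k x) (star n a k y) = sqrt R \<longleftrightarrow> ip n x y = - real a"
proof -
  let ?c = "2 * real k * real a^(2*k-1)"
  show R: "R = 2 * real n^(2*k) + 4 * real k * real a^(2*k-1) * real n + (4 * real k - 2) * real a^(2*k)"
    unfolding R_def Qf_min(1)[OF a0 k] by algebra
  show "R > 0"
  proof -
    have "real n^(2*k) > 0" using an by simp
    moreover have "4 * real k * real a^(2*k-1) * real n \<ge> 0" by simp
    moreover have "(4 * real k - 2) * real a^(2*k) \<ge> 0" using k by simp
    ultimately show ?thesis unfolding R by linarith
  qed
  have le: "Qf k a (- real a) \<le> Qf k a t" for t
    using Qf_min(2)[OF a0 k, of t] by (cases "t = - real a") auto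
  show iff: "vdist N (star n a k x) (star n a k y) = sqrt R \<longleftrightarrow> ip n x y = - real a"
    if x: "x \<in> Sigma_set n" and y: "y \<in> Sigma_set n" for x y
  proof
    assume "vdist N (star n a k x) (star n a k y) = sqrt R"
    then have "sqrt (2 * (real n^(2*k) + ?c * real n) - 2 * Qf k a (ip n x y)) = sqrt R"
      unfolding N_def vdist_eq[OF x y k] .
    then have "Qf k a (ip n x y) = Qf k a (- real a)" unfolding R_def by simp
    then show "ip n x y = - real a" using Qf_min(2)[OF a0 k] by force
  next
    assume "ip n x y = - real a"
    then show "vdist N (star n a k x) (star n a k y) = sqrt R"
      unfolding N_def vdist_eq[OF x y k] R_def by simp
  qed
  obtain x0 y0 where xy0: "x0 \<in> Sigma_set n" "y0 \<in> Sigma_set n" "ip n x0 y0 = - real a"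
    using exist_pair[OF n4 a4 a0 an] by blast
  have ne: "star n a k ` Sigma_set n \<noteq> {}" using xy0 by auto
  have "Sup {vdist N u v | u v. u \<in> star n a k ` Sigma_set n \<and> v \<in> star n a k ` Sigma_set n} = sqrt R"
  proof (rule cSup_eq_maximum)
    show "sqrt R \<in> {vdist N u v | u v. u \<in> star n a k ` Sigma_set n \<and> v \<in> star n a k ` Sigma_set n}"
    proof -
      have h: "vdist N (star n a k x0) (star n a k y0) = sqrt R" using iff[OF xy0(1,2)] xy0(3) by blast
      have "sqrt R = vdist N (star n a k x0) (star n a k y0) \<and> star n a k x0 \<in> star n a k ` Sigma_set n
         \<and> star n a k y0 \<in> star n a k ` Sigma_set n" using h xy0 by auto
      then show ?thesis by blast
    qed
    fix d assume "d \<in> {vdist N u v | u v. u \<in> star n a k ` Sigma_set n \<and> v \<in> star n a k ` Sigma_set n}"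
    then obtain x y where x: "x \<in> Sigma_set n" and y: "y \<in> Sigma_set n"
      and d: "d = vdist N (star n a k x) (star n a k y)" by blast
    have "2 * (real n^(2*k) + ?c * real n) - 2 * Qf k a (ip n x y) \<le> R"
      unfolding R_def using le[of "ip n x y"] by simp
    then show "d \<le> sqrt R" unfolding d N_def vdist_eq[OF x y k] by simp
  qed
  then show "vdiam N (star n a k ` Sigma_set n) = sqrt R" unfolding vdiam_def using ne by simp
qed


lemma span_part:
  assumes k: "0 < k"
  shows "\<exists>B :: (nat \<Rightarrow> real) set. finite B \<and> card B \<le> n^(2*k) \<and>
        (\<forall>u\<in>star n a k ` Sigma_set n. \<exists>c :: (nat \<Rightarrow> real) \<Rightarrow> real. \<forall>j<n^(2*k)+n. u j = (\<Sum>b\<in>B. c b * b j))"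
proof (cases "Sigma_set n = {}")
  case True
  then show ?thesis by (intro exI[of _ "{}"]) auto
next
  case False
  then obtain x1 where "x1 \<in> Sigma_set n" by auto
  then have n: "n > 0" by (rule Sigma_n_pos)
  let ?M = "n^(2*k)"
  let ?s = "sqrt (2 * real k * real a ^ (2*k-1))"
  have Mpos: "?M > 0" using n by simp
  have nM: "n \<le> ?M" using n k by (simp add: self_le_power)
  define bb where "bb j = (\<lambda>m. (if m = j then 1 else 0) + (if m = ?M + j \<and> j < n then ?s else 0))" for j :: nat
  have bbi: "bb j i = (if i = j then 1 else 0)" if "i < ?M" for i j
    using that unfolding bb_def by auto
  have inj: "inj_on bb {..<?M}"
  proof
    fix i j assume i: "i \<in> {..<?M}" and j: "j \<in> {..<?M}" and e: "bb i = bb j"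
    have "bb i i = 1" using i bbi by simp
    then have "bb j i = 1" using e by simp
    then show "i = j" using i bbi by (simp split: if_splits)
  qed
  show ?thesis
  proof (intro exI[of _ "bb ` {..<?M}"] conjI ballI)
    show "finite (bb ` {..<?M})" by simp
    show "card (bb ` {..<?M}) \<le> ?M" using card_image_le[of "{..<?M}" bb] by simp
    fix u assume "u \<in> star n a k ` Sigma_set n"
    then obtain x where x: "x \<in> Sigma_set n" and u: "u = star n a k x" by auto
    show "\<exists>c. \<forall>j<?M+n. u j = (\<Sum>b\<in>bb ` {..<?M}. c b * b j)"
    proof (intro exI[of _ "\<lambda>v. u (inv_into {..<?M} bb v)"] allI impI)
      fix j assume j: "j < ?M + n"
      have "(\<Sum>b\<in>bb ` {..<?M}. u (inv_into {..<?M} bb b) * b j) = (\<Sum>i<?M. u i * bb i j)"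
        by (simp add: sum.reindex[OF inj] inv_into_f_f[OF inj])
      also have "\<dots> = (\<Sum>i<?M. (if j = i then u i else 0)) + (\<Sum>i<?M. (if j = ?M + i \<and> i < n then u i * ?s else 0))"
        unfolding sum.distrib[symmetric] by (rule sum.cong) (auto simp: bb_def)
      also have "\<dots> = u j"
      proof (cases "j < ?M")
        case True
        have "(\<Sum>i<?M. (if j = ?M + i \<and> i < n then u i * ?s else 0)) = 0"
          using True by (intro sum.neutral) auto
        then show ?thesis using True by (simp add: sum.delta')
      next
        case False
        have "(\<Sum>i<?M. (if j = ?M + i \<and> i < n then u i * ?s else 0))
            = (\<Sum>i<?M. (if j - ?M = i then u i * ?s else 0))"
          using False j by (intro sum.cong) auto
        also have "\<dots> = u (j - ?M) * ?s" using False j nM by (simp add: sum.delta)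
        also have "\<dots> = u j"
        proof -
          have "u (j - ?M) = x (j - ?M)" unfolding u using star_low[OF x k, of "j - ?M"] False j by simp
          moreover have "u j = ?s * x (j - ?M)" unfolding u star_def using False j by simp
          ultimately show ?thesis by simp
        qed
        finally show ?thesis using False by (simp add: sum.delta')
      qed
      finally show "u j = (\<Sum>b\<in>bb ` {..<?M}. u (inv_into {..<?M} bb b) * b j)" by simp
    qed
  qed
qed

lemma card_small_sets:
  assumes "p > 0"
  shows "card {S. S \<subseteq> {..<n} \<and> card S \<le> p - 1} = (\<Sum>i<p. n choose i)"
proof -
  have e: "{S. S \<subseteq> {..<n} \<and> card S \<le> p - 1} = (\<Union>i\<in>{..<p}. {S. S \<subseteq> {..<n} \<and> card S = i})"
    using assms by auto
  have "card (\<Union>i\<in>{..<p}. {S. S \<subseteq> {..<n} \<and> card S = i}) = (\<Sum>i<p. card {S. S \<subseteq> {..<n} \<and> card S = i})"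
    by (rule card_UN_disjoint) (auto intro: finite_subset[of _ "Pow {..<n}"])
  also have "\<dots> = (\<Sum>i<p. n choose i)" by (simp add: n_subsets)
  finally show ?thesis using e by simp
qed

lemma card_Sigma_ge:
  assumes n: "n mod 4 = 0" "n > 0"
  shows "(n - 1) choose (n div 2 - 1) \<le> card (Sigma_set n)"
proof -
  let ?T = "{S. S \<subseteq> {1..<n} \<and> card S = n div 2 - 1}"
  let ?g = "\<lambda>S. vecS n (insert 0 S)"
  have cT: "card ?T = (n - 1) choose (n div 2 - 1)" using n_subsets[of "{1..<n}"] by simp
  have img: "?g ` ?T \<subseteq> Sigma_set n"
  proof
    fix v assume "v \<in> ?g ` ?T"
    then obtain S where S: "S \<subseteq> {1..<n}" "card S = n div 2 - 1" and v: "v = ?g S" by auto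
    have fin: "finite S" using S finite_subset by blast
    have "0 \<notin> S" using S by auto
    then have "card (insert 0 S) = n div 2" using S fin n by auto
    moreover have "insert 0 S \<subseteq> {..<n}" using S n by auto
    ultimately show "v \<in> Sigma_set n" unfolding v using n by (intro vec_in) auto
  qed
  have inj: "inj_on ?g ?T"
  proof
    fix S1 S2 assume S1: "S1 \<in> ?T" and S2: "S2 \<in> ?T" and e: "?g S1 = ?g S2"
    have s1: "insert 0 S1 \<subseteq> {..<n}" "insert 0 S2 \<subseteq> {..<n}" using S1 S2 n by auto
    have "insert 0 S1 = insert 0 S2"
      using arg_cong[OF e, of "Aset n"] unfolding Aset_vec[OF s1(1)] Aset_vec[OF s1(2)] .
    moreover have "0 \<notin> S1" "0 \<notin> S2" using S1 S2 by auto
    ultimately show "S1 = S2" by (metis Diff_insert_absorb)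
  qed
  show ?thesis using card_inj_on_le[OF inj img finite_Sigma] cT by simp
qed


lemma vdiam_single: "vdiam m {u} = 0"
proof -
  have "{vdist m u' v' | u' v'. u' \<in> {u} \<and> v' \<in> {u}} = {0}" by (auto simp: vdist_def)
  then show ?thesis unfolding vdiam_def by simp
qed

lemma vdiam_ge:
  assumes fin: "finite P" and u: "u \<in> P" and v: "v \<in> P"
  shows "vdist m u v \<le> vdiam m P"
proof -
  have e: "{vdist m u' v' | u' v'. u' \<in> P \<and> v' \<in> P} = (\<lambda>(u',v'). vdist m u' v') ` (P \<times> P)" by auto
  have "finite {vdist m u' v' | u' v'. u' \<in> P \<and> v' \<in> P}" unfolding e using fin by simp
  then have "vdist m u v \<le> Sup {vdist m u' v' | u' v'. u' \<in> P \<and> v' \<in> P}"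
    using u v by (intro cSup_upper bdd_above_finite) auto
  then show ?thesis unfolding vdiam_def using u by auto
qed

lemma borsuk_part:
  assumes n4: "n mod 4 = 0" and a4: "a mod 4 = 0" and a0: "0 < a" and an: "a < n"
    and pr: "prime ((a + n) div 4)"
    and Dpos: "vdiam N (star n a k ` Sigma_set n) > 0"
    and hD: "\<And>x y. x \<in> Sigma_set n \<Longrightarrow> y \<in> Sigma_set n \<Longrightarrow> ip n x y = - real a \<Longrightarrow>
               vdist N (star n a k x) (star n a k y) = vdiam N (star n a k ` Sigma_set n)"
  shows "real ((n - 1) choose (n div 2 - 1)) / (\<Sum>i<(a + n) div 4. real (n choose i))
          \<le> real (borsuk_num N (star n a k ` Sigma_set n))"
proof -
  define p where "p = (a + n) div 4"
  define Om where "Om = star n a k ` Sigma_set n"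
  define D where "D = vdiam N Om"
  have p4: "4 * p = a + n" using n4 a4 unfolding p_def by auto
  have prp: "prime p" using pr unfolding p_def .
  have p0: "p > 0" using prp prime_gt_0_nat by blast
  have finOm: "finite Om" unfolding Om_def using finite_Sigma by simp
  let ?FS = "{f. \<exists>P :: nat \<Rightarrow> (nat \<Rightarrow> real) set. Om = (\<Union>i<f. P i) \<and> (\<forall>i<f. vdiam N (P i) < D)}"
  have "card Om \<in> ?FS"
  proof -
    obtain h where h: "bij_betw h {0..<card Om} Om" using ex_bij_betw_nat_finite[OF finOm] by blast
    have "Om = (\<Union>i<card Om. {h i})" using h unfolding bij_betw_def by (auto simp: atLeast0LessThan)
    moreover have "\<forall>i<card Om. vdiam N {h i} < D" using Dpos unfolding D_def Om_def by (simp add: vdiam_single)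
    ultimately show ?thesis by blast
  qed
  then have "borsuk_num N Om \<in> ?FS" unfolding borsuk_num_def D_def by (intro Inf_nat_def1) blast
  then obtain P where cover: "Om = (\<Union>i<borsuk_num N Om. P i)"
    and small: "\<forall>i<borsuk_num N Om. vdiam N (P i) < D" by blast
  define f where "f = borsuk_num N Om"
  define Fi where "Fi i = {x \<in> Sigma_set n. star n a k x \<in> P i}" for i
  define Bd where "Bd = card {S. S \<subseteq> {..<n} \<and> card S \<le> p - 1}"
  have cardFi: "card (Fi i) \<le> Bd" if i: "i < f" for i
    unfolding Bd_def
  proof (rule FW[OF prp])
    show "Fi i \<subseteq> Sigma_set n" unfolding Fi_def by auto
    show "\<forall>x\<in>Fi i. \<forall>y\<in>Fi i. x \<noteq> y \<longrightarrow> mcount n x y mod p \<noteq> 0"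
    proof (intro ballI impI notI)
      fix x y assume x: "x \<in> Fi i" and y: "y \<in> Fi i" and xy: "x \<noteq> y" and md: "mcount n x y mod p = 0"
      have xS: "x \<in> Sigma_set n" and yS: "y \<in> Sigma_set n" using x y unfolding Fi_def by auto
      let ?m = "mcount n x y"
      have m0: "?m \<noteq> 0" using mcount0_eq[OF xS yS] xy by auto
      have m1: "?m + 1 \<le> n div 2" using mcount_le[OF xS yS] .
      have m2: "?m < 2 * p" using m1 p4 by linarith
      have "?m = p * (?m div p)" using md by (metis div_mult_mod_eq add_0_right mult.commute)
      moreover have "?m div p = 1"
      proof -
        have "?m div p \<noteq> 0" using m0 \<open>?m = p * (?m div p)\<close> by (metis mult_0_right)
        moreover have "?m div p < 2" using m2 p0 by (simp add: div_less_iff_less_mult mult.commute)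
        ultimately show ?thesis by linarith
      qed
      ultimately have mp: "?m = p" by simp
      have "ip n x y = - real a" unfolding ip_mcount[OF xS yS] mp using p4
        by (metis add_diff_cancel_right' diff_add_cancel minus_diff_eq of_nat_add of_nat_mult of_nat_numeral diff_self)
      then have dd: "vdist N (star n a k x) (star n a k y) = D" using hD[OF xS yS] unfolding D_def Om_def by simp
      have sub: "P i \<subseteq> Om" using cover i unfolding f_def by blast
      have "vdist N (star n a k x) (star n a k y) \<le> vdiam N (P i)"
        using x y finite_subset[OF sub finOm] unfolding Fi_def by (intro vdiam_ge) auto
      then show False using dd small i unfolding f_def by fastforce
    qed
  qed
  have "Sigma_set n \<subseteq> (\<Union>i<f. Fi i)"
  proof
    fix x assume x: "x \<in> Sigma_set n"
    then have "star n a k x \<in> Om" unfolding Om_def by simp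
    then obtain i where "i < f" "star n a k x \<in> P i" using cover unfolding f_def by blast
    then show "x \<in> (\<Union>i<f. Fi i)" using x unfolding Fi_def by blast
  qed
  then have "card (Sigma_set n) \<le> card (\<Union>i<f. Fi i)"
    by (rule card_mono[rotated]) (auto simp: Fi_def intro: finite_subset[OF _ finite_Sigma])
  also have "\<dots> \<le> (\<Sum>i<f. card (Fi i))" by (rule card_UN_le) simp
  also have "\<dots> \<le> (\<Sum>i<f. Bd)" by (rule sum_mono) (use cardFi in auto)
  also have "\<dots> = f * Bd" by simp
  finally have c1: "card (Sigma_set n) \<le> f * Bd" .
  have np: "n > 0" using an by simp
  have c2: "(n - 1) choose (n div 2 - 1) \<le> f * Bd" using card_Sigma_ge[OF n4 np] c1 by linarith
  have Bd: "Bd = (\<Sum>i<p. n choose i)" unfolding Bd_def by (rule card_small_sets[OF p0])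
  have Bdr: "(\<Sum>i<p. real (n choose i)) = real Bd" unfolding Bd by simp
  have Bdpos: "Bd > 0"
  proof -
    have "n choose 0 \<le> (\<Sum>i<p. n choose i)" using p0 by (intro member_le_sum) auto
    then show ?thesis unfolding Bd by simp
  qed
  have "real ((n - 1) choose (n div 2 - 1)) \<le> real f * real Bd" using c2 by (metis of_nat_le_iff of_nat_mult)
  then have "real ((n - 1) choose (n div 2 - 1)) / real Bd \<le> real f" using Bdpos by (simp add: pos_divide_le_eq)
  then show ?thesis unfolding Bdr[unfolded p_def] f_def Om_def by simp
qed

theorem mainTheorem6:
  fixes n a k :: nat
  assumes "n mod 4 = 0" and "a mod 4 = 0" and "0 < a" and "a < n"
    and "prime ((a + n) div 4)" and "0 < k"
  defines "N \<equiv> n^(2*k) + n"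
    and "\<Omega>' \<equiv> star n a k ` Sigma_set n"
  shows
    "(\<forall>x\<in>Sigma_set n. \<forall>y\<in>Sigma_set n.
        ip N (star n a k x) (star n a k y)
          = (ip n x y)^(2*k) + 2 * real k * real a^(2*k-1) * ip n x y)
   \<and> (\<forall>u\<in>\<Omega>'. ip N u u = real n^(2*k) + 2 * real k * real a^(2*k-1) * real n)
   \<and> (vdiam N \<Omega>')^2 = 2 * real n^(2*k) + 4 * real k * real a^(2*k-1) * real n
                        + (4 * real k - 2) * real a^(2*k)
   \<and> (\<forall>x\<in>Sigma_set n. \<forall>y\<in>Sigma_set n.
        vdist N (star n a k x) (star n a k y) = vdiam N \<Omega>' \<longleftrightarrow> ip n x y = - real a)
   \<and> (\<exists>B :: (nat \<Rightarrow> real) set. finite B \<and> card B \<le> n^(2*k) \<and>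
        (\<forall>u\<in>\<Omega>'. \<exists>c :: (nat \<Rightarrow> real) \<Rightarrow> real. \<forall>j<N. u j = (\<Sum>b\<in>B. c b * b j)))
   \<and> real (borsuk_num N \<Omega>')
       \<ge> real ((n - 1) choose (n div 2 - 1)) / (\<Sum>i<(a + n) div 4. real (n choose i))"
proof -
  note k = assms(6)
  have N: "N = n^(2*k) + n" using N_def by simp
  have Om: "\<Omega>' = star n a k ` Sigma_set n" using \<Omega>'_def by simp
  define R where "R = 2 * (real n^(2*k) + 2 * real k * real a^(2*k-1) * real n) - 2 * Qf k a (- real a)"
  note dp = diam_part[OF assms(1-4,6)]
  have diam: "vdiam N \<Omega>' = sqrt R" unfolding N Om R_def by (rule dp(1))
  have Rf: "R = 2 * real n^(2*k) + 4 * real k * real a^(2*k-1) * real n + (4 * real k - 2) * real a^(2*k)"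
    unfolding R_def by (rule dp(2))
  have R0: "R > 0" unfolding R_def by (rule dp(3))
  have iff: "\<And>x y. x \<in> Sigma_set n \<Longrightarrow> y \<in> Sigma_set n \<Longrightarrow>
           vdist N (star n a k x) (star n a k y) = sqrt R \<longleftrightarrow> ip n x y = - real a"
    unfolding N R_def by (rule dp(4))
  have P1: "\<forall>x\<in>Sigma_set n. \<forall>y\<in>Sigma_set n.
        ip N (star n a k x) (star n a k y)
          = (ip n x y)^(2*k) + 2 * real k * real a^(2*k-1) * ip n x y"
    unfolding N using star_ip k by blast
  have P2: "\<forall>u\<in>\<Omega>'. ip N u u = real n^(2*k) + 2 * real k * real a^(2*k-1) * real n"
    unfolding Om N using star_ip[OF _ _ k] ip_self by auto
  have P3: "(vdiam N \<Omega>')^2 = 2 * real n^(2*k) + 4 * real k * real a^(2*k-1) * real n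
                        + (4 * real k - 2) * real a^(2*k)"
    unfolding diam using R0 Rf by simp
  have P4: "\<forall>x\<in>Sigma_set n. \<forall>y\<in>Sigma_set n.
        vdist N (star n a k x) (star n a k y) = vdiam N \<Omega>' \<longleftrightarrow> ip n x y = - real a"
    unfolding diam using iff by blast
  have P5: "\<exists>B :: (nat \<Rightarrow> real) set. finite B \<and> card B \<le> n^(2*k) \<and>
        (\<forall>u\<in>\<Omega>'. \<exists>c :: (nat \<Rightarrow> real) \<Rightarrow> real. \<forall>j<N. u j = (\<Sum>b\<in>B. c b * b j))"
    unfolding N Om by (rule span_part[OF k])
  have P6: "real (borsuk_num N \<Omega>')
       \<ge> real ((n - 1) choose (n div 2 - 1)) / (\<Sum>i<(a + n) div 4. real (n choose i))"
    unfolding Om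
  proof (rule borsuk_part[OF assms(1-5)])
    show "vdiam N (star n a k ` Sigma_set n) > 0" using diam R0 Om by simp
    show "vdist N (star n a k x) (star n a k y) = vdiam N (star n a k ` Sigma_set n)"
      if "x \<in> Sigma_set n" "y \<in> Sigma_set n" "ip n x y = - real a" for x y
      using iff[OF that(1,2)] that(3) diam Om by simp
  qed
  show ?thesis using P1 P2 P3 P4 P5 P6 by blast
qed


end
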